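(* Let $\Gamma$ be a discrete subgroup of $E(n)$, and let $(G,V)$ be a finite index cocompact translation pair of $\Gamma$. Then \[ N_\Gamma(r)=\Theta(N_G(r))=\Theta(N_G^V(r))=\Theta(r^{\dim V})=\Theta(r^{\dim\Gamma}). \] In particular, $\dim\Gamma=k$ if and only if $N_\Gamma(r)=\Theta(r^k)$.
   Context: $E(n)$ denotes the group of isometries of $\mathbb{R}^n$; each $\gamma\in E(n)$ has the form $x\mapsto Ax+a$ with $A\in O(n)$, $a\in\mathbb{R}^n$, and $T(\gamma)=a$. $E(n)$ has the topology of $O(n)\times\mathbb{R}^n$. For a discrete $\Gamma\le E(n)$, a subgroup $G\le\Gamma$ and an affine subspace $V$, $(G,V)$ is a cocompact translation pair of $\Gamma$ if $gV=V$ and $g|_V$ is a translation of $V$, with translation vector $T_V(g)$, for all $g\in G$, and $V/G$ is compact; it is a finite index cocompact translation pair if moreover $[\Gamma:G]<\infty$. $\dim\Gamma:=\dim V$ for any finite index cocompact translation pair (independent of choice). For a discrete group $H\le E(n)$, $N_H(r)$ is the number of $\gamma\in H$ with $|T(\gamma)|\le r$; $N_G^V(r)$ is the number of $\gamma\in G$ with $|T_V(\gamma)|\le r$. For $f,g\colon[0,\infty)\to[0,\infty)$, $f=O(g)$ means $\limsup_{t\to\infty}f(t)/g(t)<\infty$, and $f=\Theta(g)$ means $f=O(g)$ and $g=O(f)$. *)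

theory Defs
  imports "HOL-Analysis.Analysis" "HOL-Library.Landau_Symbols"
begin

text \<open>An isometry x \<mapsto> A x + a of R^n is represented by the pair (A, a),
  with A an orthogonal matrix.  E(n) carries the topology of O(n) \<times> R^n,
  i.e. the subspace topology of the product euclidean space of pairs.\<close>

type_synonym 'n iso = "(real^'n^'n) \<times> (real^'n)"

definition Eucl :: "'n::finite iso set" where
  "Eucl = {(A, a). orthogonal_matrix A}"

definition iso_apply :: "'n::finite iso \<Rightarrow> real^'n \<Rightarrow> real^'n" where
  "iso_apply g x = fst g *v x + snd g"

definition iso_mult :: "'n::finite iso \<Rightarrow> 'n iso \<Rightarrow> 'n iso" where
  "iso_mult g h = (fst g ** fst h, fst g *v snd h + snd g)"

definition iso_one :: "'n::finite iso" where
  "iso_one = (mat 1, 0)"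

definition iso_inv :: "'n::finite iso \<Rightarrow> 'n iso" where
  "iso_inv g = (transpose (fst g), - (transpose (fst g) *v snd g))"

definition T :: "'n::finite iso \<Rightarrow> real^'n" where
  "T g = snd g"

definition iso_subgroup :: "'n::finite iso set \<Rightarrow> 'n iso set \<Rightarrow> bool" where
  "iso_subgroup H K \<longleftrightarrow> H \<subseteq> K \<and> iso_one \<in> H \<and>
     (\<forall>g\<in>H. \<forall>h\<in>H. iso_mult g h \<in> H) \<and> (\<forall>g\<in>H. iso_inv g \<in> H)"

definition discrete_subgroup :: "'n::finite iso set \<Rightarrow> bool" where
  "discrete_subgroup \<Gamma> \<longleftrightarrow> iso_subgroup \<Gamma> Eucl \<and>
     (\<forall>g\<in>\<Gamma>. \<exists>e>0. \<forall>h\<in>\<Gamma>. dist h g < e \<longrightarrow> h = g)"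

definition finite_index :: "'n::finite iso set \<Rightarrow> 'n iso set \<Rightarrow> bool" where
  "finite_index \<Gamma> G \<longleftrightarrow> finite ((\<lambda>g. iso_mult g ` G) ` \<Gamma>)"

text \<open>Translation vector T_V(g) of g restricted to V (well defined when g|V is a
  translation of nonempty V).\<close>
definition TV :: "(real^'n) set \<Rightarrow> 'n::finite iso \<Rightarrow> real^'n" where
  "TV V g = iso_apply g (SOME x. x \<in> V) - (SOME x. x \<in> V)"

text \<open>Compactness of the orbit space V/G with the quotient topology, unfolded:
  the open sets of V/G correspond to the G-invariant relatively open subsets of V.\<close>
definition orbit_space_compact :: "'n::finite iso set \<Rightarrow> (real^'n) set \<Rightarrow> bool" where
  "orbit_space_compact G V \<longleftrightarrow>
     (\<forall>\<U>. (\<forall>U\<in>\<U>. openin (top_of_set V) U \<and> (\<forall>g\<in>G. iso_apply g ` U \<subseteq> U)) \<and> V \<subseteq> \<Union>\<U>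
        \<longrightarrow> (\<exists>\<V>\<subseteq>\<U>. finite \<V> \<and> V \<subseteq> \<Union>\<V>))"

definition cocompact_translation_pair ::
  "'n::finite iso set \<Rightarrow> 'n iso set \<Rightarrow> (real^'n) set \<Rightarrow> bool" where
  "cocompact_translation_pair \<Gamma> G V \<longleftrightarrow>
     iso_subgroup G \<Gamma> \<and> affine V \<and> V \<noteq> {} \<and>
     (\<forall>g\<in>G. iso_apply g ` V = V \<and> (\<exists>t. \<forall>x\<in>V. iso_apply g x = x + t)) \<and>
     orbit_space_compact G V"

definition fi_cocompact_translation_pair ::
  "'n::finite iso set \<Rightarrow> 'n iso set \<Rightarrow> (real^'n) set \<Rightarrow> bool" where
  "fi_cocompact_translation_pair \<Gamma> G V \<longleftrightarrow>
     cocompact_translation_pair \<Gamma> G V \<and> finite_index \<Gamma> G"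

definition adim :: "(real^'n::finite) set \<Rightarrow> nat" where
  "adim V = nat (aff_dim V)"

definition dimGamma :: "'n::finite iso set \<Rightarrow> nat" where
  "dimGamma \<Gamma> = (THE k. \<exists>G V. fi_cocompact_translation_pair \<Gamma> G V \<and> adim V = k)"

definition Ncount :: "'n::finite iso set \<Rightarrow> real \<Rightarrow> real" where
  "Ncount H r = real (card {\<gamma>\<in>H. norm (T \<gamma>) \<le> r})"

definition NcountV :: "'n::finite iso set \<Rightarrow> (real^'n) set \<Rightarrow> real \<Rightarrow> real" where
  "NcountV G V r = real (card {\<gamma>\<in>G. norm (TV V \<gamma>) \<le> r})"

end

theory Submission
  imports Defs
begin

lemma iso_apply_mult: "iso_apply (iso_mult g h) x = iso_apply g (iso_apply h x)"
  by (simp add: iso_apply_def iso_mult_def matrix_vector_mul_assoc matrix_vector_right_distrib add.assoc)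

lemma orth_norm: assumes "orthogonal_matrix (A::real^'n^'n)" shows "norm (A *v x) = norm x"
proof -
  have "(A *v x) \<bullet> (A *v x) = x \<bullet> x"
    using assms by (metis dot_lmul_matrix matrix_vector_mul_assoc orthogonal_matrix_def matrix_vector_mul_lid vector_transpose_matrix)
  then show ?thesis by (simp add: norm_eq_sqrt_inner)
qed

lemma T_iso_mult: "T (iso_mult g h) = fst g *v T h + T g"
  by (simp add: T_def iso_mult_def)

lemma iso_mult_one: "iso_mult g iso_one = g"
  by (simp add: iso_mult_def iso_one_def)

lemma mv_neg: "(A::real^'n^'m) *v (- y) = - (A *v y)"
  by (simp add: matrix_vector_mult_def vec_eq_iff sum_negf)

lemma orth_inv_apply: assumes "orthogonal_matrix (A::real^'n^'n)" shows "A *v (transpose A *v y) = y"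
proof -
  have "A *v (transpose A *v y) = (A ** transpose A) *v y" by (simp only: matrix_vector_mul_assoc)
  also have "\<dots> = y" using assms by (simp add: orthogonal_matrix_def)
  finally show ?thesis .
qed

lemma iso_cancel: assumes "orthogonal_matrix (fst g)" shows "iso_mult g (iso_mult (iso_inv g) h) = h"
proof -
  have 1: "fst g ** (transpose (fst g) ** fst h) = fst h"
    using assms by (simp add: matrix_mul_assoc orthogonal_matrix_def)
  have 2: "fst g *v (transpose (fst g) *v snd h + - (transpose (fst g) *v snd g)) + snd g = snd h"
    by (simp only: matrix_vector_right_distrib mv_neg orth_inv_apply[OF assms]) simp
  show ?thesis unfolding iso_mult_def iso_inv_def fst_conv snd_conv 1 2 by simp
qed

lemma iso_apply_one: "iso_apply iso_one x = x"
  by (simp add: iso_apply_def iso_one_def)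

lemma mv_bound: "norm ((M::real^'n^'m) *v x) \<le> norm M * norm x"
proof -
  have c: "(M *v x) $ i = M $ i \<bullet> x" for i
    by (simp add: matrix_vector_mult_def inner_vec_def)
  have "norm (M *v x) = L2_set (\<lambda>i. norm ((M *v x) $ i)) UNIV" by (simp add: norm_vec_def)
  also have "\<dots> \<le> L2_set (\<lambda>i. norm x * norm (M $ i)) UNIV"
    apply (rule L2_set_mono) apply (auto simp: c) by (metis Cauchy_Schwarz_ineq2 mult.commute)
  also have "\<dots> = norm x * norm M"
    by (simp add: norm_vec_def L2_set_right_distrib)
  finally show ?thesis by (simp add: mult.commute)
qed

lemma norm_mul_orth: assumes "orthogonal_matrix (A::real^'n^'n)"
  shows "norm ((M::real^'n^'m) ** transpose A) = norm M"
proof -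
  have r: "(M ** transpose A) $ i = A *v (M $ i)" for i
    by (simp add: vec_eq_iff matrix_matrix_mult_def matrix_vector_mult_def transpose_def mult.commute)
  have nv: "norm X = L2_set (\<lambda>i. norm (X$i)) UNIV" for X :: "real^'n^'m" by (rule norm_vec_def)
  show ?thesis unfolding nv[of "M ** transpose A"] nv[of M] r orth_norm[OF assms] ..
qed

lemma norm_orth_le: assumes "orthogonal_matrix (A::real^'n^'n)" shows "norm A \<le> real CARD('n)"
proof -
  have "norm A = L2_set (\<lambda>i. norm (A $ i)) UNIV" by (simp add: norm_vec_def)
  also have "\<dots> \<le> sum (\<lambda>i. norm (A $ i)) UNIV" by (rule L2_set_le_sum) auto
  also have "\<dots> = real CARD('n)"
  proof -
    have "norm (A $ i) = 1" for i
      using assms unfolding orthogonal_matrix_orthonormal_rows by (metis row_def vec_nth_inverse)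
    then show ?thesis by simp
  qed
  finally show ?thesis .
qed

lemma dist_pair_le: "dist (a, b) (c, d) \<le> dist a c + dist b d"
  unfolding dist_Pair_Pair by (rule sqrt_sum_squares_le_sum) auto

lemma iso_mult_assoc: "iso_mult (iso_mult g h) k = iso_mult g (iso_mult h k)"
  by (simp add: iso_mult_def matrix_mul_assoc matrix_vector_mul_assoc matrix_vector_right_distrib add.assoc)

lemma iso_one_mult: "iso_mult iso_one g = g"
  by (simp add: iso_mult_def iso_one_def)

lemma iso_inv_left: assumes "orthogonal_matrix (fst g)" shows "iso_mult (iso_inv g) g = iso_one"
  using assms by (simp add: iso_mult_def iso_inv_def iso_one_def orthogonal_matrix_def)

lemma sep_aux:
  assumes "orthogonal_matrix (fst g)" "iso_mult h (iso_inv g) = iso_one"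
  shows "h = g"
proof -
  have "h = iso_mult h (iso_mult (iso_inv g) g)" using iso_inv_left[OF assms(1)] by (simp add: iso_mult_one)
  also have "\<dots> = g" by (simp only: iso_mult_assoc[symmetric] assms(2) iso_one_mult)
  finally show ?thesis .
qed

lemma mat_sub_rdistrib: "((X::real^'n^'m) - Y) ** Z = X ** Z - Y ** (Z::real^'k^'n)"
  by (simp add: vec_eq_iff matrix_matrix_mult_def sum_subtractf left_diff_distrib)

lemma mv_sub_rdistrib: "((X::real^'n^'m) - Y) *v v = X *v v - Y *v v"
  by (simp add: vec_eq_iff matrix_vector_mult_def sum_subtractf left_diff_distrib)

lemma dist_hginv:
  assumes "orthogonal_matrix (fst g)"
  shows "dist (iso_mult h (iso_inv g)) iso_one \<le> dist h g * (2 + norm (T g))"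
proof -
  obtain A a where g: "g = (A, a)" by (cases g)
  obtain B b where h: "h = (B, b)" by (cases h)
  have oA: "orthogonal_matrix A" using assms g by simp
  have AA: "A ** transpose A = mat 1" using oA by (simp add: orthogonal_matrix_def)
  have u: "iso_mult h (iso_inv g) = (B ** transpose A, b - (B ** transpose A) *v a)"
    unfolding h g iso_mult_def iso_inv_def fst_conv snd_conv mv_neg matrix_vector_mul_assoc by simp
  have m: "B ** transpose A - mat 1 = (B - A) ** transpose A"
    by (simp add: mat_sub_rdistrib AA)
  have dB: "norm (B - A) \<le> dist h g"
    using dist_fst_le[of h g] by (simp add: h g dist_norm)
  have db: "norm (b - a) \<le> dist h g"
    using dist_snd_le[of h g] by (simp add: h g dist_norm)
  have v: "b - (B ** transpose A) *v a = (b - a) - ((B - A) ** transpose A) *v a"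
    using AA by (simp add: mat_sub_rdistrib mv_sub_rdistrib)
  have "dist (iso_mult h (iso_inv g)) iso_one \<le> dist (B ** transpose A) (mat 1) + dist (b - (B ** transpose A) *v a) 0"
    unfolding u iso_one_def by (rule dist_pair_le)
  also have "\<dots> = norm (B - A) + norm ((b - a) - ((B - A) ** transpose A) *v a)"
    by (simp add: dist_norm m norm_mul_orth[OF oA] v)
  also have "\<dots> \<le> norm (B - A) + (norm (b - a) + norm (B - A) * norm a)"
    using norm_triangle_ineq4[of "b - a" "((B - A) ** transpose A) *v a"]
      mv_bound[of "(B - A) ** transpose A" a] by (simp add: norm_mul_orth[OF oA])
  also have "\<dots> \<le> dist h g + (dist h g + dist h g * norm a)"
    using dB db by (intro add_mono mult_right_mono) auto
  also have "\<dots> = dist h g * (2 + norm (T g))" by (simp add: g T_def algebra_simps)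
  finally show ?thesis .
qed

lemma two_in_infinite:
  assumes "infinite S" obtains y z where "y \<in> S" "z \<in> S" "y \<noteq> z"
proof -
  obtain y where y: "y \<in> S" using assms infinite_imp_nonempty by blast
  have "infinite (S - {y})" using assms by simp
  then obtain z where "z \<in> S - {y}" using infinite_imp_nonempty by blast
  then show ?thesis using y that by blast
qed

lemma separated_bounded_finite:
  fixes S :: "'a::heine_borel set"
  assumes "bounded S" "\<rho> > 0" "\<And>x y. x \<in> S \<Longrightarrow> y \<in> S \<Longrightarrow> dist x y < \<rho> \<Longrightarrow> x = y"
  shows "finite S"
proof (rule ccontr)
  assume "infinite S"
  then obtain x where "x islimpt S" using bounded_infinite_imp_islimpt[OF subset_refl assms(1)] by blast
  then have "infinite (S \<inter> ball x (\<rho>/2))" using assms(2) by (simp add: islimpt_eq_infinite_ball)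
  then obtain y z where yz: "y \<in> S \<inter> ball x (\<rho>/2)" "z \<in> S \<inter> ball x (\<rho>/2)" "y \<noteq> z"
    by (rule two_in_infinite)
  have "dist x y < \<rho>/2" "dist x z < \<rho>/2" using yz by auto
  then have "dist y z < \<rho>" by (metis dist_commute dist_triangle_half_l)
  then show False using assms(3) yz by blast
qed

lemma discrete_finite:
  assumes "discrete_subgroup \<Gamma>"
  shows "finite {\<gamma>\<in>\<Gamma>. norm (T \<gamma>) \<le> r}"
proof (cases "r \<ge> 0")
  case False
  then have "{\<gamma>\<in>\<Gamma>. norm (T \<gamma>) \<le> r} = {}" by (auto intro: order_trans[OF norm_ge_zero])
  then show ?thesis by (metis finite.emptyI)
next
  case True
  have sg: "iso_subgroup \<Gamma> Eucl" and disc: "\<forall>g\<in>\<Gamma>. \<exists>e>0. \<forall>h\<in>\<Gamma>. dist h g < e \<longrightarrow> h = g"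
    using assms by (auto simp: discrete_subgroup_def)
  have one: "iso_one \<in> \<Gamma>" and mul: "\<And>g h. g \<in> \<Gamma> \<Longrightarrow> h \<in> \<Gamma> \<Longrightarrow> iso_mult g h \<in> \<Gamma>"
    and inv: "\<And>g. g \<in> \<Gamma> \<Longrightarrow> iso_inv g \<in> \<Gamma>" and sub: "\<Gamma> \<subseteq> Eucl"
    using sg by (auto simp: iso_subgroup_def)
  obtain e where e: "e > 0" "\<And>h. h \<in> \<Gamma> \<Longrightarrow> dist h iso_one < e \<Longrightarrow> h = iso_one"
    using disc one by blast
  have orth: "orthogonal_matrix (fst g)" if "g \<in> \<Gamma>" for g
    using sub that by (auto simp: Eucl_def)
  let ?S = "{\<gamma>\<in>\<Gamma>. norm (T \<gamma>) \<le> r}"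
  show ?thesis
  proof (rule separated_bounded_finite)
    show "bounded ?S"
      unfolding bounded_iff
    proof (intro exI ballI)
      fix g assume g: "g \<in> ?S"
      have "norm g \<le> norm (fst g) + norm (snd g)" by (metis norm_Pair_le prod.collapse)
      also have "\<dots> \<le> real CARD('a) + r" using g orth[of g] norm_orth_le by (auto simp: T_def intro: add_mono)
      finally show "norm g \<le> real CARD('a) + r" .
    qed
    show "e / (2 + r) > 0" using e True by simp
    fix h g assume h: "h \<in> ?S" and g: "g \<in> ?S" and d: "dist h g < e / (2 + r)"
    have "dist (iso_mult h (iso_inv g)) iso_one \<le> dist h g * (2 + norm (T g))"
      using dist_hginv orth g by blast
    also have "\<dots> \<le> dist h g * (2 + r)" using g by (intro mult_left_mono) auto
    also have "\<dots> < e" using d True by (simp add: pos_less_divide_eq)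
    finally have "iso_mult h (iso_inv g) = iso_one" using e h g mul inv by blast
    then show "h = g" using sep_aux orth g by blast
  qed
qed

lemma orthonormal_coeff:
  fixes B :: "'a::real_inner set"
  assumes "finite B" "pairwise orthogonal B" "\<And>b. b \<in> B \<Longrightarrow> norm b = 1" "b' \<in> B"
  shows "(\<Sum>b\<in>B. c b *\<^sub>R b) \<bullet> b' = c b'"
proof -
  have "(\<Sum>b\<in>B. c b *\<^sub>R b) \<bullet> b' = (\<Sum>b\<in>B. c b * (b \<bullet> b'))"
    by (simp add: inner_sum_left)
  also have "\<dots> = (\<Sum>b\<in>B. if b = b' then c b' else 0)"
  proof (rule sum.cong)
    fix b assume b: "b \<in> B"
    show "c b * (b \<bullet> b') = (if b = b' then c b' else 0)"
    proof (cases "b = b'")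
      case True
      then show ?thesis using assms(3)[OF b] by (simp add: norm_eq_1)
    next
      case False
      then show ?thesis using assms(2) b assms(4) by (auto simp: pairwise_def orthogonal_def)
    qed
  qed simp
  also have "\<dots> = c b'" using assms(1,4) by simp
  finally show ?thesis .
qed

lemma parseval:
  fixes B :: "'a::euclidean_space set"
  assumes "finite B" "pairwise orthogonal B" "\<And>b. b \<in> B \<Longrightarrow> norm b = 1" "x \<in> span B"
  shows "(norm x)^2 = (\<Sum>b\<in>B. (x \<bullet> b)^2)"
proof -
  obtain c where x: "x = (\<Sum>b\<in>B. c b *\<^sub>R b)"
    using assms(4) span_finite[OF assms(1)] by auto
  have xb: "x \<bullet> b = c b" if "b \<in> B" for b
    unfolding x using orthonormal_coeff[OF assms(1-3) that] .
  have "(norm x)^2 = x \<bullet> x" by (simp add: power2_norm_eq_inner)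
  also have "\<dots> = (\<Sum>b\<in>B. c b * (x \<bullet> b))"
    by (subst (2) x) (simp add: inner_sum_right)
  also have "\<dots> = (\<Sum>b\<in>B. (x \<bullet> b)^2)"
    by (rule sum.cong) (auto simp: xb power2_eq_square)
  finally show ?thesis .
qed

lemma floor_in_range: "\<bar>x::real\<bar> \<le> real N \<Longrightarrow> \<lfloor>x\<rfloor> \<in> {- int N - 1 .. int N}"
  by (auto simp: abs_le_iff floor_le_iff le_floor_iff)

lemma lattice_upper:
  fixes B :: "'a::euclidean_space set"
  assumes B: "finite B" "pairwise orthogonal B" "\<And>b. b \<in> B \<Longrightarrow> norm b = 1"
    and P: "P \<subseteq> span B" and \<delta>: "\<delta> > 0"
    and sep: "\<And>x y. x \<in> P \<Longrightarrow> y \<in> P \<Longrightarrow> x \<noteq> y \<Longrightarrow> dist x y \<ge> \<delta>"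
    and bd: "\<And>p. p \<in> P \<Longrightarrow> norm p \<le> r" and r: "r \<ge> 0"
  shows "real (card P) \<le> (2 * (r * (sqrt (card B) + 1) / \<delta>) + 4) ^ card B"
proof -
  define \<epsilon> where "\<epsilon> = \<delta> / (sqrt (card B) + 1)"
  have sq: "sqrt (card B) + 1 > 0" by (smt (verit) real_sqrt_ge_zero of_nat_0_le_iff)
  have \<epsilon>: "\<epsilon> > 0" using \<delta> sq by (simp add: \<epsilon>_def)
  define N where "N = nat \<lceil>r / \<epsilon>\<rceil>"
  have N: "r / \<epsilon> \<le> N" unfolding N_def by (rule real_nat_ceiling_ge)
  define \<phi> where "\<phi> p = restrict (\<lambda>b. \<lfloor>(p \<bullet> b) / \<epsilon>\<rfloor>) B" for p
  have img: "\<phi> ` P \<subseteq> PiE B (\<lambda>_. {- int N - 1 .. int N})"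
  proof
    fix y assume "y \<in> \<phi> ` P"
    then obtain p where p: "p \<in> P" and y: "y = \<phi> p" by blast
    have "\<lfloor>(p \<bullet> b) / \<epsilon>\<rfloor> \<in> {- int N - 1 .. int N}" if b: "b \<in> B" for b
    proof -
      have "\<bar>p \<bullet> b\<bar> \<le> norm p * norm b" by (rule Cauchy_Schwarz_ineq2)
      then have pb: "\<bar>p \<bullet> b\<bar> \<le> r" using bd[OF p] B(3)[OF b] by simp
      then have "\<bar>(p \<bullet> b) / \<epsilon>\<bar> \<le> r / \<epsilon>" using \<epsilon> by (simp add: divide_right_mono)
      then have "\<bar>(p \<bullet> b) / \<epsilon>\<bar> \<le> N" using N by linarith
      then show ?thesis by (rule floor_in_range)
    qed
    then show "y \<in> PiE B (\<lambda>_. {- int N - 1 .. int N})"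
      unfolding y \<phi>_def by (simp only: restrict_PiE_iff) blast
  qed
  have inj: "inj_on \<phi> P"
  proof (rule inj_onI, rule ccontr)
    fix p q assume p: "p \<in> P" and q: "q \<in> P" and eq: "\<phi> p = \<phi> q" and ne: "p \<noteq> q"
    have cb: "((p - q) \<bullet> b)^2 \<le> \<epsilon>^2" if b: "b \<in> B" for b
    proof -
      have "\<phi> p b = \<phi> q b" using eq by simp
      then have fe: "\<lfloor>(p \<bullet> b) / \<epsilon>\<rfloor> = \<lfloor>(q \<bullet> b) / \<epsilon>\<rfloor>"
        using b unfolding \<phi>_def by simp
      have "\<bar>(p \<bullet> b) / \<epsilon> - (q \<bullet> b) / \<epsilon>\<bar> < 1"
        using of_int_floor_le[of "(p \<bullet> b) / \<epsilon>"] of_int_floor_le[of "(q \<bullet> b) / \<epsilon>"]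
          real_of_int_floor_add_one_gt[of "(p \<bullet> b) / \<epsilon>"] real_of_int_floor_add_one_gt[of "(q \<bullet> b) / \<epsilon>"]
        unfolding fe by linarith
      moreover have "(p \<bullet> b) / \<epsilon> - (q \<bullet> b) / \<epsilon> = ((p - q) \<bullet> b) / \<epsilon>"
        by (simp add: inner_diff_left diff_divide_distrib)
      ultimately have lt: "\<bar>((p - q) \<bullet> b) / \<epsilon>\<bar> < 1" by simp
      have "\<bar>(p - q) \<bullet> b\<bar> = \<bar>((p - q) \<bullet> b) / \<epsilon>\<bar> * \<epsilon>" using \<epsilon> by (simp add: abs_divide)
      also have "\<dots> < 1 * \<epsilon>" using lt \<epsilon> by (intro mult_strict_right_mono) auto
      finally have "\<bar>(p - q) \<bullet> b\<bar> < \<epsilon>" by simp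
      then show ?thesis using abs_le_square_iff[of "(p - q) \<bullet> b" \<epsilon>] \<epsilon> by simp
    qed
    have pq: "p - q \<in> span B" using P p q by (meson span_diff subsetD)
    have "(norm (p - q))^2 = (\<Sum>b\<in>B. ((p - q) \<bullet> b)^2)"
      by (rule parseval[OF B pq])
    also have "\<dots> \<le> (\<Sum>b\<in>B. \<epsilon>^2)" by (rule sum_mono) (rule cb)
    also have "\<dots> = (sqrt (card B) * \<epsilon>)^2" by (simp add: power_mult_distrib)
    finally have sqle: "(norm (p - q))^2 \<le> (sqrt (card B) * \<epsilon>)^2" .
    have "norm (p - q) \<le> sqrt (card B) * \<epsilon>"
      by (rule power2_le_imp_le[OF sqle]) (use \<epsilon> in simp)
    also have "\<dots> < (sqrt (card B) + 1) * \<epsilon>" using \<epsilon> by (simp add: distrib_right)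
    also have "\<dots> = \<delta>" unfolding \<epsilon>_def using sq by simp
    finally have "dist p q < \<delta>" by (simp add: dist_norm)
    then show False using sep[OF p q ne] by simp
  qed
  have "card P \<le> card (PiE B (\<lambda>_. {- int N - 1 .. int N}))"
    by (rule card_inj_on_le[OF inj img]) (simp add: B(1) finite_PiE)
  also have "\<dots> = (2 * N + 2) ^ card B"
  proof -
    have c: "card {- int N - 1 .. int N} = 2 * N + 2" by simp
    show ?thesis by (simp only: card_PiE[OF B(1)] c prod_constant)
  qed
  finally have "real (card P) \<le> real ((2 * N + 2) ^ card B)"
    by (simp only: of_nat_le_iff)
  also have "\<dots> = (2 * real N + 2) ^ card B" by (simp add: add.commute)
  also have "\<dots> \<le> (2 * (r * (sqrt (card B) + 1) / \<delta>) + 4) ^ card B"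
  proof (rule power_mono)
    have "real N = of_int \<lceil>r / \<epsilon>\<rceil>" unfolding N_def using r \<epsilon> by simp
    then have "real N \<le> r / \<epsilon> + 1" using of_int_ceiling_le_add_one[of "r / \<epsilon>"] by linarith
    also have "r / \<epsilon> = r * (sqrt (card B) + 1) / \<delta>" unfolding \<epsilon>_def by simp
    finally show "2 * real N + 2 \<le> 2 * (r * (sqrt (card B) + 1) / \<delta>) + 4" by linarith
  qed simp
  finally show ?thesis .
qed

lemma lattice_lower:
  fixes B :: "'a::euclidean_space set" and M :: nat
  assumes B: "finite B" "pairwise orthogonal B" "\<And>b. b \<in> B \<Longrightarrow> norm b = 1"
    and cov: "\<And>w. w \<in> span B \<Longrightarrow> \<exists>t\<in>L. dist w t \<le> R" and R: "R \<ge> 0"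
    and fin: "finite {t\<in>L. norm t \<le> real (card B) * (3 * R + 1) * M + R}"
  shows "(2 * M + 1) ^ card B \<le> card {t\<in>L. norm t \<le> real (card B) * (3 * R + 1) * M + R}"
proof -
  define Q where "Q = PiE B (\<lambda>_. {- int M .. int M})"
  define p where "p m = (\<Sum>b\<in>B. ((3 * R + 1) * of_int (m b)) *\<^sub>R b)" for m :: "'a \<Rightarrow> int"
  have ps: "p m \<in> span B" for m
    unfolding p_def by (intro span_sum span_scale span_base) auto
  have "\<forall>m. \<exists>t. t \<in> L \<and> dist (p m) t \<le> R" using cov[OF ps] by blast
  then obtain lt where lt: "\<And>m. lt m \<in> L" "\<And>m. dist (p m) (lt m) \<le> R" by metis
  have pc: "p m \<bullet> b = (3 * R + 1) * of_int (m b)" if "b \<in> B" for m b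
    unfolding p_def by (rule orthonormal_coeff[OF B that])
  have inj: "inj_on lt Q"
  proof (rule inj_onI, rule ccontr)
    fix m m' assume m: "m \<in> Q" and m': "m' \<in> Q" and eq: "lt m = lt m'" and ne: "m \<noteq> m'"
    obtain b where b: "b \<in> B" and mb: "m b \<noteq> m' b"
      using ne m m' unfolding Q_def by (meson PiE_ext)
    have one: "1 \<le> \<bar>real_of_int (m b - m' b)\<bar>" using mb by linarith
    have "3 * R + 1 \<le> (3 * R + 1) * \<bar>real_of_int (m b - m' b)\<bar>"
      using one R by (metis mult.right_neutral mult_left_mono add_nonneg_nonneg
          mult_nonneg_nonneg zero_le_numeral zero_le_one)
    also have "\<dots> = \<bar>(p m - p m') \<bullet> b\<bar>"
    proof -
      have "(p m - p m') \<bullet> b = (3 * R + 1) * real_of_int (m b - m' b)"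
        by (simp add: inner_diff_left pc[OF b] right_diff_distrib)
      then show ?thesis using R by (simp only: abs_mult)
    qed
    also have "\<dots> \<le> norm (p m - p m') * norm b" by (rule Cauchy_Schwarz_ineq2)
    also have "\<dots> = dist (p m) (p m')" using B(3)[OF b] by (simp add: dist_norm)
    also have "\<dots> \<le> dist (p m) (lt m) + dist (p m') (lt m')"
      using eq by (metis dist_commute dist_triangle)
    also have "\<dots> \<le> 2 * R" using lt(2)[of m] lt(2)[of m'] by simp
    finally show False using R by simp
  qed
  have img: "lt ` Q \<subseteq> {t\<in>L. norm t \<le> real (card B) * (3 * R + 1) * M + R}"
  proof clarify
    fix m assume m: "m \<in> Q"
    have "norm (p m) \<le> (\<Sum>b\<in>B. norm (((3 * R + 1) * of_int (m b)) *\<^sub>R b))"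
      unfolding p_def by (rule norm_sum)
    also have "\<dots> \<le> (\<Sum>b\<in>B. (3 * R + 1) * M)"
    proof (rule sum_mono)
      fix b assume b: "b \<in> B"
      have "\<bar>m b\<bar> \<le> int M" using m b unfolding Q_def by (auto simp: PiE_iff)
      then have "\<bar>real_of_int (m b)\<bar> \<le> real M" by linarith
      then show "norm (((3 * R + 1) * of_int (m b)) *\<^sub>R b) \<le> (3 * R + 1) * M"
        using B(3)[OF b] R by (simp add: abs_mult mult_left_mono)
    qed
    also have "\<dots> = real (card B) * (3 * R + 1) * M" by simp
    finally have "norm (p m) \<le> real (card B) * (3 * R + 1) * M" .
    moreover have "norm (lt m) \<le> norm (p m) + dist (p m) (lt m)"
      by (metis dist_norm norm_triangle_sub add.commute norm_minus_commute)
    ultimately show "lt m \<in> L \<and> norm (lt m) \<le> real (card B) * (3 * R + 1) * M + R"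
      using lt[of m] by linarith
  qed
  have cQ: "card Q = (2 * M + 1) ^ card B"
  proof -
    have c: "card {- int M .. int M} = 2 * M + 1" by simp
    show ?thesis unfolding Q_def by (simp only: card_PiE[OF B(1)] c prod_constant)
  qed
  have "card Q \<le> card {t\<in>L. norm t \<le> real (card B) * (3 * R + 1) * M + R}"
    by (rule card_inj_on_le[OF inj img fin])
  then show ?thesis using cQ by simp
qed

lemma iso_inv_right: assumes "orthogonal_matrix (fst g)" shows "iso_mult g (iso_inv g) = iso_one"
  using iso_cancel[OF assms, of iso_one] by (simp add: iso_mult_one)

locale tp =
  fixes \<Gamma> G :: "'n::finite iso set" and V :: "(real^'n) set"
  assumes disc: "discrete_subgroup \<Gamma>" and pair: "fi_cocompact_translation_pair \<Gamma> G V"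
begin

definition x0 where "x0 = (SOME x. x \<in> V)"
definition W where "W = (\<lambda>x. x - x0) ` V"
definition L where "L = TV V ` G"

lemma Vne: "V \<noteq> {}" and affV: "affine V" and ocV: "orbit_space_compact G V"
  and fi: "finite_index \<Gamma> G"
  and subG: "iso_subgroup G \<Gamma>"
  and actV: "\<And>g. g \<in> G \<Longrightarrow> iso_apply g ` V = V"
  and trV: "\<And>g. g \<in> G \<Longrightarrow> \<exists>t. \<forall>x\<in>V. iso_apply g x = x + t"
  using pair by (auto simp: fi_cocompact_translation_pair_def cocompact_translation_pair_def)

lemma x0V: "x0 \<in> V" unfolding x0_def using Vne by (simp add: some_in_eq)

lemma subGam: "iso_subgroup \<Gamma> Eucl" using disc by (simp add: discrete_subgroup_def)

lemma GsubGam: "G \<subseteq> \<Gamma>" and oneG: "iso_one \<in> G"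
  and mulG: "\<And>g h. g \<in> G \<Longrightarrow> h \<in> G \<Longrightarrow> iso_mult g h \<in> G"
  and invG: "\<And>g. g \<in> G \<Longrightarrow> iso_inv g \<in> G"
  using subG by (auto simp: iso_subgroup_def)

lemma orthGam: "g \<in> \<Gamma> \<Longrightarrow> orthogonal_matrix (fst g)"
  using subGam by (auto simp: iso_subgroup_def Eucl_def)

lemma orthG: "g \<in> G \<Longrightarrow> orthogonal_matrix (fst g)"
  using GsubGam orthGam by blast

lemma transl: assumes "g \<in> G" "x \<in> V" shows "iso_apply g x = x + TV V g"
proof -
  obtain t where t: "\<And>x. x \<in> V \<Longrightarrow> iso_apply g x = x + t" using trV[OF assms(1)] by blast
  have "TV V g = t" unfolding TV_def using t[OF x0V[unfolded x0_def]] by simp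
  then show ?thesis using t[OF assms(2)] by simp
qed

lemma TV_x0: "g \<in> G \<Longrightarrow> iso_apply g x0 = x0 + TV V g"
  using transl x0V by blast

lemma trans_in_V: assumes "g \<in> G" "x \<in> V" shows "x + TV V g \<in> V"
  using actV[OF assms(1)] transl[OF assms] assms(2) by (metis image_eqI)

lemma TV_mult: assumes "g \<in> G" "h \<in> G" shows "TV V (iso_mult g h) = TV V g + TV V h"
proof -
  have "iso_apply (iso_mult g h) x0 = iso_apply g (x0 + TV V h)"
    by (simp add: iso_apply_mult TV_x0[OF assms(2)])
  also have "\<dots> = x0 + TV V h + TV V g" using transl[OF assms(1) trans_in_V[OF assms(2) x0V]] .
  finally show ?thesis using TV_x0[OF mulG[OF assms]] by simp
qed

lemma TV_one: "TV V iso_one = 0"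
  using TV_x0[OF oneG] by (simp add: iso_apply_one)

lemma TV_inv: assumes "g \<in> G" shows "TV V (iso_inv g) = - TV V g"
proof -
  have "0 = TV V (iso_mult g (iso_inv g))" using iso_inv_right[OF orthG[OF assms]] TV_one by simp
  also have "\<dots> = TV V g + TV V (iso_inv g)" using TV_mult[OF assms invG[OF assms]] .
  finally show ?thesis by (simp add: eq_neg_iff_add_eq_0 add.commute)
qed

lemma subspW: "subspace W" unfolding W_def by (rule affine_diffs_subspace_subtract[OF affV x0V])

lemma TV_W: "g \<in> G \<Longrightarrow> TV V g \<in> W"
  unfolding W_def using trans_in_V[OF _ x0V] by (metis add_diff_cancel_left' image_eqI)

lemma W_V: "w \<in> W \<Longrightarrow> x0 + w \<in> V"
  unfolding W_def by auto

lemma adimW: "adim V = dim W"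
proof -
  have "x0 \<in> affine hull V" using x0V by (simp add: hull_inc)
  then have "aff_dim V = int (dim ((\<lambda>x. x - x0) ` V))" by (rule aff_dim_eq_dim_subtract)
  then show ?thesis unfolding adim_def W_def by simp
qed

lemma T_TV: assumes "g \<in> G" shows "norm (T g - TV V g) \<le> 2 * norm x0"
proof -
  have "fst g *v x0 + snd g = x0 + TV V g" using TV_x0[OF assms] by (simp add: iso_apply_def)
  then have "T g - TV V g = x0 - fst g *v x0" by (simp add: T_def algebra_simps)
  also have "norm \<dots> \<le> norm x0 + norm (fst g *v x0)" by (rule norm_triangle_ineq4)
  also have "\<dots> = 2 * norm x0" using orth_norm[OF orthG[OF assms]] by simp
  finally show ?thesis .
qed

lemma T_le: "g \<in> G \<Longrightarrow> norm (T g) \<le> norm (TV V g) + 2 * norm x0"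
  using T_TV norm_triangle_sub[of "T g" "TV V g"] by (smt (verit) norm_minus_commute norm_triangle_ineq2)

lemma TV_le: "g \<in> G \<Longrightarrow> norm (TV V g) \<le> norm (T g) + 2 * norm x0"
  using T_TV by (smt (verit) norm_minus_commute norm_triangle_ineq2)

lemma finGam: "finite {\<gamma>\<in>\<Gamma>. norm (T \<gamma>) \<le> r}"
  by (rule discrete_finite[OF disc])

lemma finG: "finite {g\<in>G. norm (T g) \<le> r}"
  by (rule finite_subset[OF _ finGam[of r]]) (use GsubGam in auto)

lemma finV: "finite {g\<in>G. norm (TV V g) \<le> r}"
  by (rule finite_subset[OF _ finGam[of "r + 2 * norm x0"]]) (use GsubGam T_le in fastforce)

lemma L_img: "{t\<in>L. norm t \<le> r} = TV V ` {g\<in>G. norm (TV V g) \<le> r}"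
  unfolding L_def by auto

lemma finL: "finite {t\<in>L. norm t \<le> r}"
  unfolding L_img using finV by simp

end

context tp begin

lemma L_diff: assumes "s \<in> L" "t \<in> L" shows "s - t \<in> L"
proof -
  obtain g h where g: "g \<in> G" "s = TV V g" and h: "h \<in> G" "t = TV V h" using assms unfolding L_def by blast
  have "TV V (iso_mult g (iso_inv h)) = s - t"
    using TV_mult[OF g(1) invG[OF h(1)]] TV_inv[OF h(1)] g h by simp
  then show ?thesis unfolding L_def using mulG[OF g(1) invG[OF h(1)]] by (metis image_eqI)
qed

lemma separation: obtains \<delta> where "\<delta> > 0" "\<And>s t. s \<in> L \<Longrightarrow> t \<in> L \<Longrightarrow> s \<noteq> t \<Longrightarrow> dist s t \<ge> \<delta>"
proof -
  define F where "F = {t\<in>L. norm t \<le> 1} - {0}"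
  have finF: "finite F" unfolding F_def using finL by simp
  obtain \<delta> where \<delta>: "\<delta> > 0" "\<delta> \<le> 1" "\<And>u. u \<in> F \<Longrightarrow> \<delta> \<le> norm u"
  proof (cases "F = {}")
    case True then show ?thesis using that[of 1] by auto
  next
    case False
    define m where "m = Min (norm ` F)"
    have "m \<in> norm ` F" unfolding m_def using False finF by simp
    then have "m > 0" unfolding F_def by auto
    moreover have "\<And>u. u \<in> F \<Longrightarrow> m \<le> norm u" unfolding m_def using finF by simp
    ultimately show ?thesis
    proof (intro that[of "min 1 m"])
      fix u assume "u \<in> F" "\<And>u. u \<in> F \<Longrightarrow> m \<le> norm u"
      then show "min 1 m \<le> norm u" by (meson min.coboundedI2)
    qed auto
  qed
  show ?thesis
  proof (rule that[OF \<delta>(1)])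
    fix s t assume s: "s \<in> L" and t: "t \<in> L" and ne: "s \<noteq> t"
    have u: "s - t \<in> L" by (rule L_diff[OF s t])
    show "dist s t \<ge> \<delta>"
    proof (cases "norm (s - t) \<le> 1")
      case True
      then have "s - t \<in> F" unfolding F_def using u ne by simp
      then show ?thesis using \<delta>(3) by (simp add: dist_norm)
    next
      case False
      then show ?thesis using \<delta>(2) by (simp add: dist_norm)
    qed
  qed
qed

lemma covering: obtains R where "R \<ge> 0" "\<And>w. w \<in> W \<Longrightarrow> \<exists>t\<in>L. dist w t \<le> R"
proof -
  define U where "U k = {x\<in>V. \<exists>g\<in>G. dist x (iso_apply g x0) < real k}" for k :: nat
  have Uopen: "openin (top_of_set V) (U k)" for k
  proof -
    have "U k = V \<inter> (\<Union>g\<in>G. ball (iso_apply g x0) (real k))"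
      unfolding U_def by (auto simp: dist_commute)
    then show ?thesis by (simp add: openin_open_Int open_UN)
  qed
  have Uinv: "iso_apply h ` U k \<subseteq> U k" if h: "h \<in> G" for h k
  proof clarify
    fix x assume "x \<in> U k"
    then obtain g where x: "x \<in> V" and g: "g \<in> G" and d: "dist x (iso_apply g x0) < real k"
      unfolding U_def by blast
    have gx0: "iso_apply g x0 \<in> V" using actV[OF g] x0V by blast
    have "iso_apply h x \<in> V" using actV[OF h] x by blast
    moreover have "dist (iso_apply h x) (iso_apply (iso_mult h g) x0) < real k"
      using d by (simp add: iso_apply_mult transl[OF h x] transl[OF h gx0] dist_norm)
    ultimately show "iso_apply h x \<in> U k" unfolding U_def using mulG[OF h g] by blast
  qed
  have cover: "V \<subseteq> \<Union>(range U)"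
  proof
    fix x assume x: "x \<in> V"
    have "dist x (iso_apply iso_one x0) < real (nat \<lceil>dist x x0\<rceil> + 1)"
      by (simp add: iso_apply_one) linarith
    then have "x \<in> U (nat \<lceil>dist x x0\<rceil> + 1)" unfolding U_def using x oneG by blast
    then show "x \<in> \<Union>(range U)" by blast
  qed
  have pre: "(\<forall>U'\<in>range U. openin (top_of_set V) U' \<and> (\<forall>g\<in>G. iso_apply g ` U' \<subseteq> U')) \<and> V \<subseteq> \<Union>(range U)"
    using Uinv Uopen cover by simp
  have "\<exists>\<V>\<subseteq>range U. finite \<V> \<and> V \<subseteq> \<Union>\<V>"
    by (rule mp[OF spec[of _ "range U", OF ocV[unfolded orbit_space_compact_def]] pre])
  then obtain \<V> where \<V>: "\<V> \<subseteq> range U" "finite \<V>" "V \<subseteq> \<Union>\<V>" by blast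
  obtain K where K: "finite K" "\<V> = U ` K" using finite_subset_image[OF \<V>(2,1)] by blast
  define N where "N = Max (insert 0 K)"
  have "U k \<subseteq> U N" if "k \<in> K" for k
  proof -
    have "k \<le> N" unfolding N_def using K(1) that by simp
    then show ?thesis unfolding U_def by (force intro: less_le_trans)
  qed
  then have VN: "V \<subseteq> U N" using \<V>(3) K(2) by blast
  show ?thesis
  proof (rule that[of "real N"])
    fix w assume w: "w \<in> W"
    then have "x0 + w \<in> U N" using VN W_V by blast
    then obtain g where g: "g \<in> G" and d: "dist (x0 + w) (iso_apply g x0) < real N"
      unfolding U_def by blast
    have "dist w (TV V g) < real N" using d by (simp add: TV_x0[OF g] dist_norm)
    then show "\<exists>t\<in>L. dist w t \<le> real N" unfolding L_def using g by force
  qed simp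
qed

lemma basis: obtains B where "finite B" "pairwise orthogonal B" "\<And>b. b \<in> B \<Longrightarrow> norm b = 1"
  "card B = adim V" "span B = W"
proof -
  obtain B where "B \<subseteq> W" "pairwise orthogonal B" "\<And>x. x \<in> B \<Longrightarrow> norm x = 1"
    "independent B" "card B = dim W" "span B = W"
    using orthonormal_basis_subspace[OF subspW] by blast
  then show ?thesis using that independent_imp_finite adimW by metis
qed

end

context tp begin

definition cL where "cL r = real (card {t\<in>L. norm t \<le> r})"

lemma NV_ge: "cL r \<le> NcountV G V r"
  unfolding cL_def NcountV_def L_img using card_image_le[OF finV] by simp

lemma NV_le: obtains m :: real where "m \<ge> 0" "\<And>r. NcountV G V r \<le> m * cL r"
proof -
  define K where "K = {k\<in>G. TV V k = 0}"
  have finK: "finite K" by (rule finite_subset[OF _ finV[of 0]]) (auto simp: K_def)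
  have "NcountV G V r \<le> real (card K) * cL r" for r
  proof -
    define S where "S = {g\<in>G. norm (TV V g) \<le> r}"
    define I where "I = TV V ` S"
    have finI: "finite I" unfolding I_def S_def using finV by simp
    have SU: "S = (\<Union>t\<in>I. {g\<in>S. TV V g = t})" unfolding I_def by blast
    have fib: "card {g\<in>S. TV V g = t} \<le> card K" if t: "t \<in> I" for t
    proof -
      obtain g0 where g0: "g0 \<in> S" "TV V g0 = t" using t unfolding I_def by blast
      have g0G: "g0 \<in> G" using g0 unfolding S_def by simp
      show ?thesis
      proof (rule card_inj_on_le[OF _ _ finK])
        show "inj_on (iso_mult (iso_inv g0)) {g\<in>S. TV V g = t}"
          by (rule inj_onI) (metis iso_cancel orthG g0G)
        show "iso_mult (iso_inv g0) ` {g\<in>S. TV V g = t} \<subseteq> K"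
        proof (rule image_subsetI)
          fix h assume "h \<in> {g\<in>S. TV V g = t}"
          then have h: "h \<in> S" "TV V h = t" by auto
          have hG: "h \<in> G" using h unfolding S_def by simp
          show "iso_mult (iso_inv g0) h \<in> K" unfolding K_def
            using mulG[OF invG[OF g0G] hG] TV_mult[OF invG[OF g0G] hG] TV_inv[OF g0G] g0(2) h(2) by simp
        qed
      qed
    qed
    have "card S \<le> (\<Sum>t\<in>I. card {g\<in>S. TV V g = t})"
      by (subst SU) (rule card_UN_le[OF finI])
    also have "\<dots> \<le> (\<Sum>t\<in>I. card K)" by (rule sum_mono) (rule fib)
    also have "\<dots> = card K * card I" by simp
    finally have "real (card S) \<le> real (card K * card I)"
      by (simp only: of_nat_le_iff)
    moreover have "I = {t\<in>L. norm t \<le> r}" unfolding I_def S_def L_img ..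
    ultimately have "real (card S) \<le> real (card K) * cL r" unfolding cL_def by simp
    then show "NcountV G V r \<le> real (card K) * cL r" unfolding NcountV_def S_def .
  qed
  then show thesis using that[of "real (card K)"] by simp
qed

lemma NG_le_NV: "Ncount G r \<le> NcountV G V (r + 2 * norm x0)"
proof -
  have "{g\<in>G. norm (T g) \<le> r} \<subseteq> {g\<in>G. norm (TV V g) \<le> r + 2 * norm x0}"
  proof (rule subsetI)
    fix g assume "g \<in> {g\<in>G. norm (T g) \<le> r}"
    then have "g \<in> G" "norm (T g) \<le> r" by auto
    then show "g \<in> {g\<in>G. norm (TV V g) \<le> r + 2 * norm x0}" using TV_le[of g] by simp
  qed
  then show ?thesis unfolding Ncount_def NcountV_def by (simp add: card_mono[OF finV])
qed

lemma NV_le_NG: "NcountV G V r \<le> Ncount G (r + 2 * norm x0)"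
proof -
  have "{g\<in>G. norm (TV V g) \<le> r} \<subseteq> {g\<in>G. norm (T g) \<le> r + 2 * norm x0}"
  proof (rule subsetI)
    fix g assume "g \<in> {g\<in>G. norm (TV V g) \<le> r}"
    then have "g \<in> G" "norm (TV V g) \<le> r" by auto
    then show "g \<in> {g\<in>G. norm (T g) \<le> r + 2 * norm x0}" using T_le[of g] by simp
  qed
  then show ?thesis unfolding Ncount_def NcountV_def by (simp add: card_mono[OF finG])
qed

lemma NG_le_NGam: "Ncount G r \<le> Ncount \<Gamma> r"
proof -
  have "{g\<in>G. norm (T g) \<le> r} \<subseteq> {g\<in>\<Gamma>. norm (T g) \<le> r}" using GsubGam by blast
  then show ?thesis unfolding Ncount_def by (simp add: card_mono[OF finGam])
qed

lemma NGam_le: obtains q c1 :: real where "q \<ge> 0" "c1 \<ge> 0" "\<And>r. Ncount \<Gamma> r \<le> q * Ncount G (r + c1)"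
proof -
  define C where "C = (\<lambda>g. iso_mult g ` G) ` \<Gamma>"
  have finC: "finite C" using fi unfolding C_def finite_index_def .
  define \<rho> where "\<rho> X = (SOME g. g \<in> \<Gamma> \<and> X = iso_mult g ` G)" for X
  have \<rho>: "\<rho> X \<in> \<Gamma>" "X = iso_mult (\<rho> X) ` G" if "X \<in> C" for X
  proof -
    have "\<exists>g. g \<in> \<Gamma> \<and> X = iso_mult g ` G" using that unfolding C_def by blast
    then have "\<rho> X \<in> \<Gamma> \<and> X = iso_mult (\<rho> X) ` G" unfolding \<rho>_def by (rule someI_ex)
    then show "\<rho> X \<in> \<Gamma>" "X = iso_mult (\<rho> X) ` G" by auto
  qed
  define c1 where "c1 = (\<Sum>X\<in>C. norm (T (\<rho> X)))"
  have c1: "norm (T (\<rho> X)) \<le> c1" if "X \<in> C" for X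
    unfolding c1_def by (rule member_le_sum[OF that _ finC]) simp
  have "Ncount \<Gamma> r \<le> real (card C) * Ncount G (r + c1)" for r
  proof -
    define A where "A X = iso_mult (\<rho> X) ` {g\<in>G. norm (T g) \<le> r + c1}" for X
    have sub: "{\<gamma>\<in>\<Gamma>. norm (T \<gamma>) \<le> r} \<subseteq> (\<Union>X\<in>C. A X)"
    proof (rule subsetI)
      fix \<gamma> assume "\<gamma> \<in> {\<gamma>\<in>\<Gamma>. norm (T \<gamma>) \<le> r}"
      then have \<gamma>: "\<gamma> \<in> \<Gamma>" "norm (T \<gamma>) \<le> r" by auto
      define X where "X = iso_mult \<gamma> ` G"
      have XC: "X \<in> C" unfolding X_def C_def using \<gamma> by blast
      have "\<gamma> \<in> X" unfolding X_def using oneG by (metis image_eqI iso_mult_one)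
      then obtain g where g: "g \<in> G" "\<gamma> = iso_mult (\<rho> X) g" using \<rho>(2)[OF XC] by blast
      have "T \<gamma> = fst (\<rho> X) *v T g + T (\<rho> X)" using g(2) by (simp add: T_iso_mult)
      then have "norm (T g) = norm (T \<gamma> - T (\<rho> X))" using orth_norm[OF orthGam[OF \<rho>(1)[OF XC]]] by simp
      also have "\<dots> \<le> norm (T \<gamma>) + norm (T (\<rho> X))" by (rule norm_triangle_ineq4)
      also have "\<dots> \<le> r + c1" using \<gamma>(2) c1[OF XC] by simp
      finally have "g \<in> {g\<in>G. norm (T g) \<le> r + c1}" using g by simp
      then show "\<gamma> \<in> (\<Union>X\<in>C. A X)" unfolding A_def using XC g(2) by blast
    qed
    have "card {\<gamma>\<in>\<Gamma>. norm (T \<gamma>) \<le> r} \<le> card (\<Union>X\<in>C. A X)"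
      by (rule card_mono[OF _ sub]) (use finC finG in \<open>simp add: A_def\<close>)
    also have "\<dots> \<le> (\<Sum>X\<in>C. card (A X))" by (rule card_UN_le[OF finC])
    also have "\<dots> \<le> (\<Sum>X\<in>C. card {g\<in>G. norm (T g) \<le> r + c1})"
      unfolding A_def by (rule sum_mono) (rule card_image_le[OF finG])
    also have "\<dots> = card C * card {g\<in>G. norm (T g) \<le> r + c1}" by simp
    finally have "real (card {\<gamma>\<in>\<Gamma>. norm (T \<gamma>) \<le> r}) \<le> real (card C * card {g\<in>G. norm (T g) \<le> r + c1})"
      by (simp only: of_nat_le_iff)
    then show ?thesis unfolding Ncount_def by simp
  qed
  moreover have "c1 \<ge> 0" unfolding c1_def by (simp add: sum_nonneg)
  ultimately show ?thesis using that[of "real (card C)" c1] by simp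
qed

end

lemma shift_up: assumes "r \<ge> 1" "c \<ge> 0" shows "(r + c)^d \<le> (1 + c)^d * (r::real)^d"
proof -
  have "c * 1 \<le> c * r" using assms by (intro mult_left_mono) auto
  moreover have "(1 + c) * r = r + c * r" by (simp add: distrib_right)
  ultimately have "r + c \<le> (1 + c) * r" by simp
  then have "(r + c)^d \<le> ((1 + c) * r)^d" using assms by (intro power_mono) auto
  then show ?thesis by (simp add: power_mult_distrib)
qed

lemma shift_down: assumes "r \<ge> 2 * c" "c \<ge> 0" shows "(1/2)^d * (r::real)^d \<le> (r - c)^d"
proof -
  have "(1/2)^d * r^d = (r/2)^d" by (simp add: power_divide)
  also have "\<dots> \<le> (r - c)^d" using assms by (intro power_mono) auto
  finally show ?thesis .
qed

lemma theta_from_bounds: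
  fixes f :: "real \<Rightarrow> real"
  assumes "c1 > 0" "c2 > 0" "\<And>r. r \<ge> r0 \<Longrightarrow> c1 * r^d \<le> f r \<and> f r \<le> c2 * r^d"
  shows "f \<in> \<Theta>(\<lambda>r. r^d)"
proof (rule bigthetaI'[OF assms(1,2)])
  show "\<forall>\<^sub>F r in at_top. c1 * norm (r^d) \<le> norm (f r) \<and> norm (f r) \<le> c2 * norm (r^d)"
    unfolding eventually_at_top_linorder
  proof (intro exI allI impI)
    fix r :: real assume r: "r \<ge> max r0 0"
    have "0 \<le> c1 * r^d" using assms(1) r by simp
    then show "c1 * norm (r^d) \<le> norm (f r) \<and> norm (f r) \<le> c2 * norm (r^d)"
      using assms(3)[of r] r by (simp add: abs_of_nonneg)
  qed
qed

context tp begin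

lemma cL_upper: obtains K where "K \<ge> 0" "\<And>r. r \<ge> 1 \<Longrightarrow> cL r \<le> K * r ^ adim V"
proof -
  obtain B where B: "finite B" "pairwise orthogonal B" "\<And>b. b \<in> B \<Longrightarrow> norm b = 1"
    "card B = adim V" "span B = W" using basis by blast
  obtain \<delta> where \<delta>: "\<delta> > 0" "\<And>s t. s \<in> L \<Longrightarrow> t \<in> L \<Longrightarrow> s \<noteq> t \<Longrightarrow> dist s t \<ge> \<delta>"
    using separation by blast
  define s where "s = sqrt (card B)"
  have s: "s \<ge> 0" unfolding s_def by simp
  define K1 where "K1 = 2 * (s + 1) / \<delta> + 4"
  have K1: "K1 \<ge> 0" unfolding K1_def using s \<delta> by simp
  show ?thesis
  proof (rule that[of "K1 ^ adim V"])
    show "0 \<le> K1 ^ adim V" using K1 by simp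
    fix r :: real assume r: "r \<ge> 1"
    have LW: "{t\<in>L. norm t \<le> r} \<subseteq> span B" unfolding B(5) L_def using TV_W by blast
    have "cL r \<le> (2 * (r * (s + 1) / \<delta>) + 4) ^ card B"
      unfolding cL_def s_def
      by (rule lattice_upper[OF B(1-3) LW \<delta>(1)]) (use \<delta>(2) r in auto)
    also have "\<dots> \<le> (K1 * r) ^ card B"
    proof (rule power_mono)
      have "2 * (r * (s + 1) / \<delta>) = (2 * (s + 1) / \<delta>) * r" by simp
      moreover have "4 \<le> 4 * r" using r by simp
      moreover have "K1 * r = (2 * (s + 1) / \<delta>) * r + 4 * r" unfolding K1_def by (simp add: distrib_right)
      ultimately show "2 * (r * (s + 1) / \<delta>) + 4 \<le> K1 * r" by linarith
      show "0 \<le> 2 * (r * (s + 1) / \<delta>) + 4" using r s \<delta> by simp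
    qed
    also have "\<dots> = K1 ^ adim V * r ^ adim V" using B(4) by (simp add: power_mult_distrib)
    finally show "cL r \<le> K1 ^ adim V * r ^ adim V" .
  qed
qed

lemma cL_lower: obtains \<kappa> r0 where "\<kappa> > 0" "\<And>r. r \<ge> r0 \<Longrightarrow> \<kappa> * r ^ adim V \<le> cL r"
proof -
  obtain B where B: "finite B" "pairwise orthogonal B" "\<And>b. b \<in> B \<Longrightarrow> norm b = 1"
    "card B = adim V" "span B = W" using basis by blast
  obtain R where R: "R \<ge> 0" "\<And>w. w \<in> W \<Longrightarrow> \<exists>t\<in>L. dist w t \<le> R" using covering by blast
  define d where "d = adim V"
  define a where "a = (real d + 1) * (3 * R + 1)"
  have a: "a > 0" unfolding a_def using R by (simp add: add_pos_nonneg)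
  show ?thesis
  proof (rule that[of "(1 / (2 * a)) ^ d" "2 * R"])
    show "(1 / (2 * a)) ^ d > 0" using a by simp
    fix r :: real assume r: "r \<ge> 2 * R"
    define M where "M = nat \<lfloor>(r - R) / a\<rfloor>"
    have rR: "r - R \<ge> 0" using r R by simp
    have M1: "real M \<le> (r - R) / a" unfolding M_def using rR a by simp
    have M2: "(r - R) / a \<le> real M + 1" unfolding M_def using rR a
      by (metis less_eq_real_def of_nat_nat real_of_int_floor_add_one_gt zero_le_floor
          divide_nonneg_pos)
    have "real d * (3 * R + 1) * M \<le> a * M" unfolding a_def using R by (intro mult_right_mono) auto
    also have "\<dots> \<le> r - R" using M1 a by (simp add: le_divide_eq mult.commute)
    finally have le: "real (card B) * (3 * R + 1) * M + R \<le> r" using B(4) d_def by simp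
    have cov: "\<And>w. w \<in> span B \<Longrightarrow> \<exists>t\<in>L. dist w t \<le> R" using R(2) B(5) by simp
    have "(2 * M + 1) ^ card B \<le> card {t\<in>L. norm t \<le> real (card B) * (3 * R + 1) * M + R}"
      by (rule lattice_lower[OF B(1-3) cov R(1) finL])
    also have "\<dots> \<le> card {t\<in>L. norm t \<le> r}"
      by (rule card_mono[OF finL]) (use le in auto)
    finally have nat: "(2 * M + 1) ^ d \<le> card {t\<in>L. norm t \<le> r}" using B(4) d_def by simp
    then have "real ((2 * M + 1) ^ d) \<le> cL r" unfolding cL_def by (simp only: of_nat_le_iff)
    moreover have "(1 / (2 * a)) ^ d * r ^ d \<le> real ((2 * M + 1) ^ d)"
    proof -
      have "(1 / (2 * a)) ^ d * r ^ d = (r / (2 * a)) ^ d" by (simp add: power_divide)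
      also have "\<dots> \<le> (real M + 1) ^ d"
      proof (rule power_mono)
        have "r / (2 * a) = (r / 2) / a" by simp
        also have "\<dots> \<le> (r - R) / a" using r a by (intro divide_right_mono) auto
        finally show "r / (2 * a) \<le> real M + 1" using M2 by simp
        show "0 \<le> r / (2 * a)" using r R a by simp
      qed
      also have "\<dots> \<le> real ((2 * M + 1) ^ d)" by (simp add: power_mono)
      finally show ?thesis .
    qed
    ultimately show "(1 / (2 * a)) ^ d * r ^ adim V \<le> cL r" unfolding d_def by simp
  qed
qed

end

context tp begin

lemma growth:
  "NcountV G V \<in> \<Theta>(\<lambda>r. r ^ adim V) \<and> Ncount G \<in> \<Theta>(\<lambda>r. r ^ adim V)
   \<and> Ncount \<Gamma> \<in> \<Theta>(\<lambda>r. r ^ adim V)"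
proof -
  define d where "d = adim V"
  obtain K where K: "K \<ge> 0" "\<And>r. r \<ge> 1 \<Longrightarrow> cL r \<le> K * r ^ d" using cL_upper d_def by blast
  obtain \<kappa> r0 where \<kappa>: "\<kappa> > 0" "\<And>r. r \<ge> r0 \<Longrightarrow> \<kappa> * r ^ d \<le> cL r" using cL_lower d_def by blast
  obtain m where m: "m \<ge> 0" "\<And>r. NcountV G V r \<le> m * cL r" using NV_le by blast
  obtain q c1 where q: "q \<ge> 0" "c1 \<ge> 0" "\<And>r. Ncount \<Gamma> r \<le> q * Ncount G (r + c1)" using NGam_le by blast
  define c0 where "c0 = 2 * norm x0"
  have c0: "c0 \<ge> 0" unfolding c0_def by simp
  define CV where "CV = m * K + 1"
  have "0 \<le> m * K" using m(1) K(1) by simp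
  then have CV: "CV > 0" unfolding CV_def by simp
  have NVlo: "\<kappa> * r ^ d \<le> NcountV G V r" if "r \<ge> r0" for r
    using \<kappa>(2)[OF that] NV_ge[of r] by linarith
  have NVup: "NcountV G V r \<le> CV * r ^ d" if "r \<ge> 1" for r
  proof -
    have "NcountV G V r \<le> m * (K * r ^ d)" using m(2)[of r] K(2)[OF that] m(1)
      by (meson mult_left_mono order_trans)
    also have "\<dots> \<le> CV * r ^ d" unfolding CV_def using that by (simp add: distrib_right mult.assoc)
    finally show ?thesis .
  qed
  define rG where "rG = max (max 1 (r0 + c0)) (2 * c0)"
  define CG where "CG = CV * (1 + c0) ^ d"
  have CG: "CG > 0" unfolding CG_def using CV c0 by simp
  have NGup: "Ncount G r \<le> CG * r ^ d" if "r \<ge> 1" for r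
  proof -
    have "Ncount G r \<le> NcountV G V (r + c0)" unfolding c0_def by (rule NG_le_NV)
    also have "\<dots> \<le> CV * (r + c0) ^ d" using that c0 by (intro NVup) simp
    also have "\<dots> \<le> CV * ((1 + c0) ^ d * r ^ d)"
      using shift_up[OF that c0] CV by (intro mult_left_mono) auto
    finally show ?thesis unfolding CG_def by (simp add: mult.assoc)
  qed
  have NGlo: "(\<kappa> * (1/2)^d) * r ^ d \<le> Ncount G r" if "r \<ge> rG" for r
  proof -
    have r1: "r - c0 \<ge> r0" "r \<ge> 2 * c0" using that unfolding rG_def by auto
    have "(\<kappa> * (1/2)^d) * r ^ d = \<kappa> * ((1/2)^d * r ^ d)" by simp
    also have "\<dots> \<le> \<kappa> * (r - c0) ^ d" using shift_down[OF r1(2) c0] \<kappa>(1) by (intro mult_left_mono) auto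
    also have "\<dots> \<le> NcountV G V (r - c0)" by (rule NVlo[OF r1(1)])
    also have "\<dots> \<le> Ncount G (r - c0 + 2 * norm x0)" by (rule NV_le_NG)
    also have "r - c0 + 2 * norm x0 = r" unfolding c0_def by simp
    finally show ?thesis .
  qed
  define CGam where "CGam = q * CG * (1 + c1) ^ d + 1"
  have "0 \<le> q * CG * (1 + c1) ^ d" using q(1,2) CG by simp
  then have CGam: "CGam > 0" unfolding CGam_def by simp
  have NGamup: "Ncount \<Gamma> r \<le> CGam * r ^ d" if "r \<ge> 1" for r
  proof -
    have "Ncount \<Gamma> r \<le> q * Ncount G (r + c1)" by (rule q(3))
    also have "\<dots> \<le> q * (CG * (r + c1) ^ d)" using NGup[of "r + c1"] that q by (intro mult_left_mono) auto
    also have "\<dots> \<le> q * (CG * ((1 + c1) ^ d * r ^ d))"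
      using shift_up[OF that q(2)] q(1) CG by (intro mult_left_mono) auto
    also have "\<dots> = (q * CG * (1 + c1) ^ d) * r ^ d" by simp
    also have "\<dots> \<le> CGam * r ^ d" unfolding CGam_def using that by (simp add: distrib_right)
    finally show ?thesis .
  qed
  have lo: "\<kappa> * (1/2)^d > 0" using \<kappa> by simp
  have t1: "NcountV G V \<in> \<Theta>(\<lambda>r. r ^ d)"
    by (rule theta_from_bounds[OF \<kappa>(1) CV, of "max 1 r0"]) (use NVlo NVup in auto)
  have t2: "Ncount G \<in> \<Theta>(\<lambda>r. r ^ d)"
    by (rule theta_from_bounds[OF lo CG, of rG]) (use NGlo NGup rG_def in auto)
  have t3: "Ncount \<Gamma> \<in> \<Theta>(\<lambda>r. r ^ d)"
  proof (rule theta_from_bounds[OF lo CGam, of rG])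
    fix r assume r: "r \<ge> rG"
    then have "r \<ge> 1" unfolding rG_def by auto
    then show "\<kappa> * (1 / 2) ^ d * r ^ d \<le> Ncount \<Gamma> r \<and> Ncount \<Gamma> r \<le> CGam * r ^ d"
      using NGlo[OF r] NG_le_NGam[of r] NGamup by fastforce
  qed
  show ?thesis using t1 t2 t3 unfolding d_def by blast
qed

end

lemma growth_global:
  assumes "discrete_subgroup \<Gamma>" "fi_cocompact_translation_pair \<Gamma> G V"
  shows "NcountV G V \<in> \<Theta>(\<lambda>r. r ^ adim V) \<and> Ncount G \<in> \<Theta>(\<lambda>r. r ^ adim V)
   \<and> Ncount \<Gamma> \<in> \<Theta>(\<lambda>r. r ^ adim V)"
  using tp.growth[OF tp.intro[OF assms]] .

lemma pow_theta_eq: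
  assumes "(\<lambda>r::real. r ^ a) \<in> \<Theta>(\<lambda>r. r ^ b)" shows "a = b"
proof -
  have e: "(\<lambda>r::real. r powr real k) \<in> \<Theta>(\<lambda>r. r ^ k)" for k
    by (rule bigthetaI_cong) (auto simp: eventually_at_top_linorder powr_realpow intro!: exI[of _ 1])
  have "(\<lambda>r::real. r powr real a) \<in> \<Theta>(\<lambda>r. r powr real b)"
    using landau_theta.trans[OF e[of a] landau_theta.trans[OF assms e[of b, unfolded bigtheta_sym[of "\<lambda>r. r powr real b"]]]] .
  then have "real a = real b"
    using powr_bigtheta_iff[of "\<lambda>x. x" at_top "real a" "real b"] by (simp add: filterlim_ident)
  then show ?thesis by simp
qed


lemma theta_same: "f \<in> \<Theta>[F](h) \<Longrightarrow> g \<in> \<Theta>[F](h) \<Longrightarrow> f \<in> \<Theta>[F](g)"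
  by (rule landau_theta.trans, assumption, subst bigtheta_sym, assumption)

theorem mainTheorem8:
  fixes \<Gamma> G :: "'n::finite iso set" and V :: "(real^'n) set"
  assumes "discrete_subgroup \<Gamma>"
    and "fi_cocompact_translation_pair \<Gamma> G V"
  shows "Ncount \<Gamma> \<in> \<Theta>(Ncount G)
    \<and> Ncount G \<in> \<Theta>(NcountV G V)
    \<and> NcountV G V \<in> \<Theta>(\<lambda>r. r ^ adim V)
    \<and> (\<lambda>r::real. r ^ adim V) \<in> \<Theta>(\<lambda>r. r ^ dimGamma \<Gamma>)
    \<and> (\<forall>k::nat. dimGamma \<Gamma> = k \<longleftrightarrow> Ncount \<Gamma> \<in> \<Theta>(\<lambda>r. r ^ k))"
proof -
  have g: "NcountV G V \<in> \<Theta>(\<lambda>r. r ^ adim V) \<and> Ncount G \<in> \<Theta>(\<lambda>r. r ^ adim V)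
     \<and> Ncount \<Gamma> \<in> \<Theta>(\<lambda>r. r ^ adim V)" by (rule growth_global[OF assms])
  then have gV: "NcountV G V \<in> \<Theta>(\<lambda>r. r ^ adim V)" and gG: "Ncount G \<in> \<Theta>(\<lambda>r. r ^ adim V)"
    and gGam: "Ncount \<Gamma> \<in> \<Theta>(\<lambda>r. r ^ adim V)" by auto
  have uniq: "adim V' = adim V" if "fi_cocompact_translation_pair \<Gamma> G' V'" for G' :: "'n iso set" and V'
  proof -
    have "Ncount \<Gamma> \<in> \<Theta>(\<lambda>r. r ^ adim V')" using growth_global[OF assms(1) that] by blast
    then have "(\<lambda>r. r ^ adim V') \<in> \<Theta>(Ncount \<Gamma>)" by (simp only: bigtheta_sym)
    then have "(\<lambda>r. r ^ adim V') \<in> \<Theta>(\<lambda>r::real. r ^ adim V)"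
      using gGam by (rule landau_theta.trans)
    then show ?thesis by (rule pow_theta_eq)
  qed
  have dimG: "dimGamma \<Gamma> = adim V"
    unfolding dimGamma_def
  proof (rule the_equality)
    show "\<exists>G' V'. fi_cocompact_translation_pair \<Gamma> G' V' \<and> adim V' = adim V" using assms(2) by blast
    fix k assume "\<exists>G' V'. fi_cocompact_translation_pair \<Gamma> G' V' \<and> adim V' = k"
    then show "k = adim V" using uniq by blast
  qed
  have c1: "Ncount \<Gamma> \<in> \<Theta>(Ncount G)" by (rule theta_same[OF gGam gG])
  have c2: "Ncount G \<in> \<Theta>(NcountV G V)" by (rule theta_same[OF gG gV])
  have c4: "(\<lambda>r::real. r ^ adim V) \<in> \<Theta>(\<lambda>r. r ^ dimGamma \<Gamma>)" by (simp add: dimG)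
  have c5: "dimGamma \<Gamma> = k \<longleftrightarrow> Ncount \<Gamma> \<in> \<Theta>(\<lambda>r. r ^ k)" for k :: nat
  proof
    assume "dimGamma \<Gamma> = k" then show "Ncount \<Gamma> \<in> \<Theta>(\<lambda>r. r ^ k)" using gGam dimG by simp
  next
    assume h: "Ncount \<Gamma> \<in> \<Theta>(\<lambda>r. r ^ k)"
    have "(\<lambda>r. r ^ k) \<in> \<Theta>(Ncount \<Gamma>)" using h by (simp only: bigtheta_sym)
    then have "(\<lambda>r. r ^ k) \<in> \<Theta>(\<lambda>r::real. r ^ adim V)"
      using gGam by (rule landau_theta.trans)
    then have "k = adim V" by (rule pow_theta_eq)
    then show "dimGamma \<Gamma> = k" using dimG by simp
  qed
  show ?thesis using c1 c2 gV c4 c5 by blast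
qed

end
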